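(* Let $k\ge 1$ and let $\lambda=(\lambda_1,\ldots,\lambda_k)$ be a partition with at most $k$ nonzero parts (trailing zeros allowed). Define $\mu=(\mu_1,\ldots,\mu_k)$ by $\mu_1=\lambda_1$ and $\mu_i=\min\{\mu_{i-1},\lambda_i+(i-1)\}$ for $1<i\le k$. Then $\mu$ is the unique partition that is maximal for $\lambda$.
   Context: A partition is a weakly decreasing sequence of nonnegative integers; $\mathcal P_k$ denotes the set of partitions of length at most $k$ (length = number of nonzero parts), written as sequences of length $k$. Partitions are identified with their Young diagrams (English convention, $(i,j)$ is the $j$th box of row $i$); $|\lambda|=\sum_i\lambda_i$. For $\lambda,\mu\in\mathcal P_k$ with $\lambda\subseteq\mu$, ${\sf Tab}(\mu/\lambda)$ is the set of fillings of the boxes of the skew shape $\mu/\lambda$ with entries in $\{1,\ldots,k\}$ such that entries strictly increase left to right in each row, strictly increase top to bottom in each column, and every entry in row $i$ is at most $i-1$ (for each $i\in\{1,\ldots,k\}$). A partition $\mu\in\mathcal P_k$ with $\lambda\subseteq\mu$ is called maximal for $\lambda$ if ${\sf Tab}(\mu/\lambda)\neq\emptyset$ and ${\sf Tab}(\nu/\lambda)=\emptyset$ for every $\nu\in\mathcal P_k$ with $\lambda\subseteq\nu$ and $|\nu|>|\mu|$. *)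

theory Defs
  imports Main
begin

text \<open>Partitions in P_k are lists of length k (parts lam!0, ..., lam!(k-1), i.e. row i is lam!(i-1)),
  weakly decreasing, nonnegative integers (nat).\<close>
definition is_partition :: "nat \<Rightarrow> nat list \<Rightarrow> bool" where
  "is_partition k lam \<longleftrightarrow> length lam = k \<and> sorted_wrt (\<ge>) lam"

definition part_size :: "nat list \<Rightarrow> nat" where
  "part_size lam = sum_list lam"

definition part_le :: "nat list \<Rightarrow> nat list \<Rightarrow> bool" where
  "part_le lam mu \<longleftrightarrow> length lam = length mu \<and> (\<forall>i<length lam. lam ! i \<le> mu ! i)"

definition skew_boxes :: "nat list \<Rightarrow> nat list \<Rightarrow> (nat \<times> nat) set" where
  "skew_boxes lam mu = {(i, j). 1 \<le> i \<and> i \<le> length lam \<and> lam ! (i - 1) < j \<and> j \<le> mu ! (i - 1)}"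

text \<open>Tab(mu/lam): fillings with entries in {1..k}, strictly increasing along rows and
  columns, entries in row i at most i-1. Fillings are represented extensionally
  (value 0 outside the skew shape).\<close>
definition Tab :: "nat \<Rightarrow> nat list \<Rightarrow> nat list \<Rightarrow> (nat \<times> nat \<Rightarrow> nat) set" where
  "Tab k lam mu = {T.
     (\<forall>b\<in>skew_boxes lam mu. T b \<in> {1..k}) \<and>
     (\<forall>i j j'. (i, j) \<in> skew_boxes lam mu \<and> (i, j') \<in> skew_boxes lam mu \<and> j < j'
        \<longrightarrow> T (i, j) < T (i, j')) \<and>
     (\<forall>i i' j. (i, j) \<in> skew_boxes lam mu \<and> (i', j) \<in> skew_boxes lam mu \<and> i < i'
        \<longrightarrow> T (i, j) < T (i', j)) \<and>
     (\<forall>i j. (i, j) \<in> skew_boxes lam mu \<longrightarrow> T (i, j) \<le> i - 1) \<and>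
     (\<forall>b. b \<notin> skew_boxes lam mu \<longrightarrow> T b = 0)}"

definition is_maximal :: "nat \<Rightarrow> nat list \<Rightarrow> nat list \<Rightarrow> bool" where
  "is_maximal k lam mu \<longleftrightarrow>
     is_partition k mu \<and> part_le lam mu \<and> Tab k lam mu \<noteq> {} \<and>
     (\<forall>nu. is_partition k nu \<and> part_le lam nu \<and> part_size nu > part_size mu
        \<longrightarrow> Tab k lam nu = {})"

fun mu_at :: "nat list \<Rightarrow> nat \<Rightarrow> nat" where
  "mu_at lam 0 = 0"
| "mu_at lam (Suc 0) = lam ! 0"
| "mu_at lam (Suc (Suc n)) = min (mu_at lam (Suc n)) (lam ! (Suc n) + Suc n)"

definition max_mu :: "nat \<Rightarrow> nat list \<Rightarrow> nat list" where
  "max_mu k lam = map (mu_at lam) [1..<k+1]"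

end

theory Submission
  imports Defs
begin

lemma mu_step: "n \<ge> 1 \<Longrightarrow> mu_at lam (Suc n) = min (mu_at lam n) (lam ! n + n)"
  by (cases n) auto

lemma mu_le_add: "mu_at lam (Suc n) \<le> lam ! n + n"
  by (cases n) auto

lemma mu_mono: assumes "1 \<le> a" "a \<le> b" shows "mu_at lam b \<le> mu_at lam a"
  using assms(2)
proof (induction b rule: dec_induct)
  case base then show ?case by simp
next
  case (step n)
  then show ?case using mu_step[of n lam] assms(1) by auto
qed

lemma lam_le_mu:
  assumes "sorted_wrt (\<ge>) lam" "n < length lam"
  shows "lam ! n \<le> mu_at lam (Suc n)"
  using assms(2)
proof (induction n)
  case 0 then show ?case by simp
next
  case (Suc n)
  have "lam ! Suc n \<le> lam ! n" using assms(1) Suc.prems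
    by (metis lessI sorted_wrt_nth_less)
  then show ?case using Suc mu_step[of "Suc n" lam] by auto
qed

lemma nth_max_mu: "n < k \<Longrightarrow> max_mu k lam ! n = mu_at lam (Suc n)"
  unfolding max_mu_def by (simp del: upt_Suc add: nth_upt)

lemma tab_exists:
  assumes len: "length M = length lam" and srt: "sorted_wrt (\<ge>) M"
    and bnd: "\<forall>n<length lam. M ! n \<le> lam ! n + n" and kl: "length lam \<le> k"
  shows "Tab k lam M \<noteq> {}"
proof -
  define T where "T = (\<lambda>(i,j). if (i,j) \<in> skew_boxes lam M then j + i - 1 - M ! (i - 1) else (0::nat))"
  have box: "(i,j) \<in> skew_boxes lam M \<longleftrightarrow> 1 \<le> i \<and> i \<le> length lam \<and> lam ! (i - 1) < j \<and> j \<le> M ! (i - 1)" for i j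
    unfolding skew_boxes_def by auto
  have lo: "M ! (i - 1) < j + i - 1" if "(i,j) \<in> skew_boxes lam M" for i j
  proof -
    have "i - 1 < length lam" using that box by auto
    then have "M ! (i - 1) \<le> lam ! (i - 1) + (i - 1)" using bnd by auto
    then show ?thesis using that box by auto
  qed
  have "T \<in> Tab k lam M"
    unfolding Tab_def
  proof (intro CollectI conjI allI impI ballI)
    fix b assume b: "b \<in> skew_boxes lam M"
    obtain i j where ij: "b = (i,j)" by force
    show "T b \<in> {1..k}" using lo[of i j] b box[of i j] kl unfolding ij T_def by auto
  next
    fix i j j' assume a: "(i, j) \<in> skew_boxes lam M \<and> (i, j') \<in> skew_boxes lam M \<and> j < j'"
    then show "T (i, j) < T (i, j')" using lo[of i j] lo[of i j'] unfolding T_def by auto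
  next
    fix i i' j assume a: "(i, j) \<in> skew_boxes lam M \<and> (i', j) \<in> skew_boxes lam M \<and> i < i'"
    then have "M ! (i' - 1) \<le> M ! (i - 1)"
    proof -
      have "i - 1 < i' - 1" "i' - 1 < length M" using a box[of i j] box[of i' j] len by auto
      then show ?thesis using srt sorted_wrt_nth_less by blast
    qed
    moreover have "T (i, j) = j + i - 1 - M ! (i - 1)" "T (i', j) = j + i' - 1 - M ! (i' - 1)"
      using a unfolding T_def by auto
    ultimately show "T (i, j) < T (i', j)" using a lo[of i j] lo[of i' j] by linarith
  next
    fix i j assume a: "(i, j) \<in> skew_boxes lam M"
    then show "T (i, j) \<le> i - 1" using box[of i j] unfolding T_def by auto
  next
    fix b assume "b \<notin> skew_boxes lam M"
    then show "T b = 0" unfolding T_def by (auto split: prod.splits)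
  qed
  then show ?thesis by blast
qed

lemma row_bound:
  assumes T: "T \<in> Tab k lam nu" and pl: "part_le lam nu" and n: "n < length lam"
  shows "nu ! n \<le> lam ! n + n"
proof -
  have box: "(Suc n, j) \<in> skew_boxes lam nu \<longleftrightarrow> lam ! n < j \<and> j \<le> nu ! n" for j
    unfolding skew_boxes_def using n by auto
  have key: "m \<le> T (Suc n, lam ! n + m)" if "1 \<le> m" "lam ! n + m \<le> nu ! n" for m
    using that
  proof (induction m rule: dec_induct)
    case base
    then show ?case using T box[of "lam ! n + 1"] unfolding Tab_def by auto
  next
    case (step m)
    have "T (Suc n, lam ! n + m) < T (Suc n, lam ! n + Suc m)"
      using T box[of "lam ! n + m"] box[of "lam ! n + Suc m"] step.hyps step.prems
      unfolding Tab_def by auto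
    then show ?case using step by auto
  qed
  show ?thesis
  proof (rule ccontr)
    assume "\<not> ?thesis"
    then have c: "nu ! n > lam ! n + n" by simp
    define m where "m = nu ! n - lam ! n"
    have m1: "m \<le> T (Suc n, nu ! n)" using key[of m] c unfolding m_def by auto
    have "(Suc n, nu ! n) \<in> skew_boxes lam nu" using box[of "nu ! n"] c by auto
    then have "T (Suc n, nu ! n) \<le> Suc n - 1"
      using T unfolding Tab_def by blast
    then have "T (Suc n, nu ! n) \<le> n" by simp
    then show False using m1 c unfolding m_def by linarith
  qed
qed

lemma nu_le_mu:
  assumes "\<forall>n<length lam. nu ! n \<le> lam ! n + n" and "sorted_wrt (\<ge>) nu"
    and "length nu = length lam" and "n < length lam"
  shows "nu ! n \<le> mu_at lam (Suc n)"
  using assms(4)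
proof (induction n)
  case 0 then show ?case using assms(1)[rule_format, of 0] by simp
next
  case (Suc n)
  have "nu ! Suc n \<le> nu ! n" using assms(2,3) Suc.prems
    by (metis lessI sorted_wrt_nth_less)
  then show ?case using Suc assms(1) mu_step[of "Suc n" lam] by auto
qed

theorem lemma3p4:
  fixes k :: nat and lam :: "nat list"
  assumes "k \<ge> 1" and "is_partition k lam"
  shows "is_maximal k lam (max_mu k lam) \<and>
         (\<forall>nu. is_maximal k lam nu \<longrightarrow> nu = max_mu k lam)"
proof -
  define M where "M = max_mu k lam"
  have lenl: "length lam = k" and sl: "sorted_wrt (\<ge>) lam"
    using assms(2) unfolding is_partition_def by auto
  have lenM: "length M = k" unfolding M_def max_mu_def by simp
  have Mn: "n < k \<Longrightarrow> M ! n = mu_at lam (Suc n)" for n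
    unfolding M_def by (rule nth_max_mu)
  have sM: "sorted_wrt (\<ge>) M"
    unfolding sorted_wrt_iff_nth_less lenM using Mn mu_mono by auto
  have pM: "is_partition k M" using lenM sM unfolding is_partition_def by auto
  have plM: "part_le lam M" unfolding part_le_def using lenl lenM Mn lam_le_mu[OF sl] by auto
  have tM: "Tab k lam M \<noteq> {}"
    using tab_exists[of M lam k] lenM lenl sM Mn mu_le_add by auto
  have lennu: "length nu = k"
    if "is_partition k nu" "part_le lam nu" "Tab k lam nu \<noteq> {}" for nu
    using that(1) unfolding is_partition_def by auto
  have upper: "\<forall>n<k. nu ! n \<le> M ! n"
    if hh: "is_partition k nu" "part_le lam nu" "Tab k lam nu \<noteq> {}" for nu
  proof -
    obtain T where T: "T \<in> Tab k lam nu" using hh(3) by blast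
    have "\<forall>n<length lam. nu ! n \<le> lam ! n + n" using row_bound[OF T hh(2)] by auto
    then show "\<forall>n<k. nu ! n \<le> M ! n"
      using nu_le_mu[of lam nu] hh(1) lenl Mn unfolding is_partition_def by auto
  qed
  have sizele: "part_size nu \<le> part_size M"
    if "is_partition k nu" "part_le lam nu" "Tab k lam nu \<noteq> {}" for nu
  proof -
    have "part_size nu = (\<Sum>i<k. nu ! i)" unfolding part_size_def
      using lennu[OF that] by (simp add: sum_list_sum_nth atLeast0LessThan)
    also have "\<dots> \<le> (\<Sum>i<k. M ! i)" using upper[OF that] by (intro sum_mono) auto
    also have "\<dots> = part_size M" unfolding part_size_def
      using lenM by (simp add: sum_list_sum_nth atLeast0LessThan)
    finally show ?thesis .
  qed
  have max: "is_maximal k lam M"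
    unfolding is_maximal_def using pM plM tM sizele by (meson not_le)
  have uniq: "nu = M" if "is_maximal k lam nu" for nu
  proof (rule ccontr)
    assume ne: "nu \<noteq> M"
    note m = that[unfolded is_maximal_def]
    note h = conjunct1[OF m] conjunct1[OF conjunct2[OF m]] conjunct1[OF conjunct2[OF conjunct2[OF m]]]
    have ln: "length nu = k" using lennu[OF h] .
    have "\<exists>i<k. nu ! i \<noteq> M ! i"
    proof (rule ccontr)
      assume "\<not> (\<exists>i<k. nu ! i \<noteq> M ! i)"
      then have "nu = M" using ln lenM by (simp add: nth_equalityI)
      then show False using ne by simp
    qed
    then obtain i where i: "i < k" "nu ! i \<noteq> M ! i" by blast
    have "part_size nu = (\<Sum>i<k. nu ! i)" unfolding part_size_def
      using ln by (simp add: sum_list_sum_nth atLeast0LessThan)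
    also have "\<dots> < (\<Sum>i<k. M ! i)"
    proof (rule sum_strict_mono_ex1)
      show "\<forall>x\<in>{..<k}. nu ! x \<le> M ! x" using upper[OF h] by auto
      have "nu ! i \<le> M ! i" using upper[OF h] i(1) by blast
      then have "nu ! i < M ! i" using i(2) by simp
      then show "\<exists>a\<in>{..<k}. nu ! a < M ! a" using i(1) by blast
      show "finite {..<k}" by simp
    qed
    also have "\<dots> = part_size M" unfolding part_size_def
      using lenM by (simp add: sum_list_sum_nth atLeast0LessThan)
    finally have "part_size M > part_size nu" .
    moreover have "\<forall>nu'. is_partition k nu' \<and> part_le lam nu' \<and> part_size nu' > part_size nu
        \<longrightarrow> Tab k lam nu' = {}" using conjunct2[OF conjunct2[OF conjunct2[OF m]]] by assumption
    ultimately have "Tab k lam M = {}" using pM plM by blast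
    then show False using tM by simp
  qed
  show ?thesis using max uniq unfolding M_def by blast
qed

end
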